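(* Let $W\in\mathbb{D}_n$ be a Dale matrix with excitatory set $\mathcal{E}$ and inhibitory set $\mathcal{I}$, and let $W'\in\mathbb{D}_{n+1}$ be a Dale matrix with excitatory set $\mathcal{E}$ and inhibitory set $\mathcal{I}\cup\{n+1\}$ such that $W'_{[n]}=W$ (the principal submatrix on $[n]$) and such that for every $i\in\mathcal{E}$: if $W'_{i(n+1)}<0$ then there exists $j\in\mathcal{I}$ with $W_{ij}<0$. Assume both $W$ and $W'$ satisfy the Ground Assumption. Then $\mathcal{C}(W)=\mathcal{C}(W')$.
   Context: Threshold-linear network: $\dot x_i=-x_i+[\sum_j W_{ij}x_j+b_i]_+$ with $[y]_+=\max(0,y)$; a fixed point is $x^*$ with $x^*=[Wx^*+b]_+$. A Dale matrix $W\in\mathbb{D}_n$ is an $n\times n$ real matrix with a partition $[n]=\mathcal{E}\sqcup\mathcal{I}$ such that $W_{ii}=0$, $W_{ji}\ge0$ for all $j$ if $i\in\mathcal{E}$, $W_{ji}\le0$ for all $j$ if $i\in\mathcal{I}$. Ground Assumption: $(I-W)_\sigma$ nonsingular for every nonempty $\sigma$ of indices. Excitatory support: $\mathrm{supp}_+x=\{i\in\mathcal{E}:x_i>0\}$. Combinatorial code: $\mathcal{C}(W)=\{\mathrm{supp}_+x^*: b\in\mathbb{R}^n_{\ge0},\ x^*\in\mathbb{R}^n_{\ge0}\text{ a fixed point of }(W,b)\}$. *)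

theory Defs
  imports "HOL-Analysis.Analysis"
begin

text \<open>Matrices are functions nat => nat => real, indices 0..n-1 stand for [n];
  the new index n+1 of the paper is index n here.  Vectors are nat => real.\<close>

definition dale :: "nat \<Rightarrow> nat set \<Rightarrow> (nat \<Rightarrow> nat \<Rightarrow> real) \<Rightarrow> bool" where
  "dale n E W \<longleftrightarrow> E \<subseteq> {..<n}
     \<and> (\<forall>i<n. W i i = 0)
     \<and> (\<forall>i<n. \<forall>j<n. i \<in> E \<longrightarrow> W j i \<ge> 0)
     \<and> (\<forall>i<n. \<forall>j<n. i \<notin> E \<longrightarrow> W j i \<le> 0)"

definition det_on :: "nat set \<Rightarrow> (nat \<Rightarrow> nat \<Rightarrow> real) \<Rightarrow> real" where
  "det_on s M = (\<Sum>p | p permutes s. of_int (sign p) * (\<Prod>i\<in>s. M i (p i)))"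

definition ground :: "nat \<Rightarrow> (nat \<Rightarrow> nat \<Rightarrow> real) \<Rightarrow> bool" where
  "ground n W \<longleftrightarrow> (\<forall>s. s \<subseteq> {..<n} \<and> s \<noteq> {} \<longrightarrow>
      det_on s (\<lambda>i j. (if i = j then 1 else 0) - W i j) \<noteq> 0)"

definition is_fixed_point :: "nat \<Rightarrow> (nat \<Rightarrow> nat \<Rightarrow> real) \<Rightarrow> (nat \<Rightarrow> real) \<Rightarrow> (nat \<Rightarrow> real) \<Rightarrow> bool" where
  "is_fixed_point n W b x \<longleftrightarrow>
     (\<forall>i<n. x i = max 0 ((\<Sum>j<n. W i j * x j) + b i))"

definition code :: "nat \<Rightarrow> nat set \<Rightarrow> (nat \<Rightarrow> nat \<Rightarrow> real) \<Rightarrow> nat set set" where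
  "code n E W = {{i \<in> E. x i > 0} | x. \<exists>b. (\<forall>i<n. b i \<ge> 0) \<and> (\<forall>i<n. x i \<ge> 0)
                     \<and> is_fixed_point n W b x}"

end

theory Submission
  imports Defs
begin

lemma Wn_lemma:
  assumes d1: "dale n E W" and d2: "dale (Suc n) E W'"
  shows "\<forall>i<Suc n. W' i n \<le> 0"
proof -
  have En: "E \<subseteq> {..<n}" using d1 by (simp add: dale_def)
  have nE: "n \<notin> E" using En by auto
  have h: "\<forall>i<Suc n. \<forall>j<Suc n. i \<notin> E \<longrightarrow> W' j i \<le> 0" using d2 by (simp add: dale_def)
  show ?thesis using h nE by simp
qed

lemma dir1:
  assumes d1: "dale n E W" and d2: "dale (Suc n) E W'"
    and eq: "\<forall>i<n. \<forall>j<n. W' i j = W i j"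
  shows "code n E W \<subseteq> code (Suc n) E W'"
proof
  fix s assume "s \<in> code n E W"
  then obtain x b where s: "s = {i\<in>E. x i > 0}" and b: "\<forall>i<n. b i \<ge> 0"
    and x: "\<forall>i<n. x i \<ge> 0" and fp: "is_fixed_point n W b x"
    unfolding code_def by blast
  have En: "E \<subseteq> {..<n}" using d1 by (simp add: dale_def)
  have Wn: "\<forall>i<Suc n. W' i n \<le> 0" using Wn_lemma[OF d1 d2] .
  have Wnn: "W' n n = 0" using d2 by (simp add: dale_def)
  define v where "v = max 0 (\<Sum>j<n. W' n j * x j)"
  define x' where "x' = x(n := v)"
  define b' where "b' = (\<lambda>i. if i < n then b i - W' i n * v else 0)"
  have v0: "v \<ge> 0" by (simp add: v_def)
  have "is_fixed_point (Suc n) W' b' x'"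
    unfolding is_fixed_point_def
  proof (intro allI impI)
    fix i assume i: "i < Suc n"
    have c: "(\<Sum>j<n. W' i j * x' j) = (\<Sum>j<n. W' i j * x j)"
      by (rule sum.cong) (auto simp: x'_def)
    have sx: "(\<Sum>j<Suc n. W' i j * x' j) = (\<Sum>j<n. W' i j * x j) + W' i n * v"
      using c by (simp add: x'_def)
    show "x' i = max 0 ((\<Sum>j<Suc n. W' i j * x' j) + b' i)"
    proof (cases "i < n")
      case True
      have "(\<Sum>j<n. W' i j * x j) = (\<Sum>j<n. W i j * x j)" using eq True by simp
      have f: "x i = max 0 ((\<Sum>j<n. W i j * x j) + b i)"
        using fp True unfolding is_fixed_point_def by blast
      have "x' i = x i" "b' i = b i - W' i n * v" using True by (simp_all add: x'_def b'_def)
      then show ?thesis unfolding sx using f \<open>(\<Sum>j<n. W' i j * x j) = (\<Sum>j<n. W i j * x j)\<close> by simp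
    next
      case False then have "i = n" using i by simp
      then show ?thesis using Wnn by (simp add: sx x'_def b'_def v_def)
    qed
  qed
  moreover have "\<forall>i<Suc n. b' i \<ge> 0"
  proof (intro allI impI)
    fix i assume i: "i < Suc n"
    have "W' i n * v \<le> 0" using Wn i v0 by (simp add: mult_nonpos_nonneg)
    then show "b' i \<ge> 0"
    proof (cases "i < n")
      case True
      then have "b i \<ge> 0" using b by blast
      then show ?thesis using True \<open>W' i n * v \<le> 0\<close> by (simp add: b'_def)
    qed (simp add: b'_def)
  qed
  moreover have "\<forall>i<Suc n. x' i \<ge> 0" using x v0 by (simp add: x'_def less_Suc_eq)
  moreover have "s = {i\<in>E. x' i > 0}" using s En by (auto simp: x'_def)
  ultimately show "s \<in> code (Suc n) E W'" unfolding code_def by blast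
qed

lemma dir2:
  assumes d1: "dale n E W" and d2: "dale (Suc n) E W'"
    and eq: "\<forall>i<n. \<forall>j<n. W' i j = W i j"
    and cond: "\<forall>i\<in>E. W' i n < 0 \<longrightarrow> (\<exists>j\<in>{..<n} - E. W i j < 0)"
  shows "code (Suc n) E W' \<subseteq> code n E W"
proof
  fix s assume "s \<in> code (Suc n) E W'"
  then obtain x' b' where s: "s = {i\<in>E. x' i > 0}" and b': "\<forall>i<Suc n. b' i \<ge> 0"
    and x': "\<forall>i<Suc n. x' i \<ge> 0" and fp: "is_fixed_point (Suc n) W' b' x'"
    unfolding code_def by blast
  have En: "E \<subseteq> {..<n}" using d1 by (simp add: dale_def)
  have Wn: "\<forall>i<Suc n. W' i n \<le> 0" using Wn_lemma[OF d1 d2] .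
  define I where "I = {..<n} - E"
  have IW: "\<forall>k<n. \<forall>j\<in>I. W k j \<le> 0" using d1 unfolding dale_def I_def by auto
  define A where "A = (\<lambda>k. - W' k n * x' n)"
  define S where "S = (\<lambda>k. \<Sum>j\<in>I. W k j)"
  define c where "c = (\<lambda>k. A k * (1 + (if S k < 0 then 1 / (- S k) else 0)))"
  define t where "t = (\<Sum>k<n. c k)"
  have xn: "x' n \<ge> 0" using x' by simp
  have A0: "\<And>k. k < n \<Longrightarrow> A k \<ge> 0" using Wn xn unfolding A_def
    by (simp add: mult_nonpos_nonneg)
  have c0: "\<And>k. k < n \<Longrightarrow> c k \<ge> A k"
  proof -
    fix k assume k: "k < n"
    have "(1::real) \<le> 1 + (if S k < 0 then 1 / (- S k) else 0)" by simp
    then show "c k \<ge> A k" unfolding c_def using A0[OF k]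
      using mult_left_mono[of 1 "1 + (if S k < 0 then 1 / (- S k) else 0)" "A k"] by simp
  qed
  have tc: "\<And>k. k < n \<Longrightarrow> t \<ge> c k"
    unfolding t_def by (rule member_le_sum) (auto intro: order_trans[OF A0 c0])
  have tA: "\<And>k. k < n \<Longrightarrow> t \<ge> A k" using tc c0 by (meson order_trans)
  have t0: "t \<ge> 0" unfolding t_def by (rule sum_nonneg) (auto intro: order_trans[OF A0 c0])
  have tS: "\<And>k. k < n \<Longrightarrow> S k < 0 \<Longrightarrow> t * (- S k) \<ge> A k"
  proof -
    fix k assume k: "k < n" and Sk: "S k < 0"
    have ce: "c k = A k + A k / (- S k)" using Sk by (simp add: c_def algebra_simps)
    have cl: "A k / (- S k) \<le> c k" using ce A0[OF k] by simp
    have "A k = (A k / (- S k)) * (- S k)" using Sk by simp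
    also have "\<dots> \<le> c k * (- S k)"
      using Sk cl by (intro mult_right_mono) auto
    also have "\<dots> \<le> t * (- S k)" using Sk tc[OF k] by (intro mult_right_mono) auto
    finally show "t * (- S k) \<ge> A k" .
  qed
  define x where "x = (\<lambda>k. if k \<in> E then x' k else x' k + t)"
  define b where "b = (\<lambda>k. if x k > 0 then x k - (\<Sum>l<n. W k l * x l) else 0)"
  have key: "\<And>k. (\<Sum>l<n. W k l * x l) = (\<Sum>l<n. W k l * x' l) + t * S k"
  proof -
    fix k
    have "(\<Sum>l<n. W k l * x l) = (\<Sum>l<n. W k l * x' l + (if l \<in> I then W k l * t else 0))"
      by (rule sum.cong) (auto simp: x_def I_def algebra_simps)
    also have "\<dots> = (\<Sum>l<n. W k l * x' l) + (\<Sum>l\<in>{..<n} \<inter> I. W k l * t)"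
      by (simp add: sum.distrib sum.inter_restrict)
    also have "{..<n} \<inter> I = I" by (auto simp: I_def)
    finally show "(\<Sum>l<n. W k l * x l) = (\<Sum>l<n. W k l * x' l) + t * S k"
      by (simp add: S_def sum_distrib_left mult.commute)
  qed
  define P where "P = (\<lambda>k. \<Sum>l<n. W k l * x' l)"
  have Pfp: "\<And>k. k < n \<Longrightarrow> x' k = max 0 (P k - A k + b' k)"
  proof -
    fix k assume k: "k < n"
    have "(\<Sum>l<n. W' k l * x' l) = P k" unfolding P_def using eq k by simp
    moreover have "x' k = max 0 ((\<Sum>l<Suc n. W' k l * x' l) + b' k)"
      using fp k unfolding is_fixed_point_def by (meson less_SucI)
    ultimately show "x' k = max 0 (P k - A k + b' k)" unfolding A_def by simp
  qed
  have Sle: "\<And>k. k < n \<Longrightarrow> S k \<le> 0" unfolding S_def using IW by (auto intro: sum_nonpos)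
  have SE: "\<And>k. k \<in> E \<Longrightarrow> W' k n < 0 \<Longrightarrow> S k < 0"
  proof -
    fix k assume k: "k \<in> E" "W' k n < 0"
    then obtain j where j: "j \<in> I" "W k j < 0" using cond unfolding I_def by blast
    have kn: "k < n" using k En by auto
    have "S k = W k j + (\<Sum>l\<in>I - {j}. W k l)" unfolding S_def using j
      by (simp add: I_def sum.remove)
    moreover have "(\<Sum>l\<in>I - {j}. W k l) \<le> 0" using IW kn by (auto intro: sum_nonpos)
    ultimately show "S k < 0" using j by simp
  qed
  have AE: "\<And>k. k < n \<Longrightarrow> \<not> W' k n < 0 \<Longrightarrow> A k = 0"
  proof -
    fix k assume k: "k < n" and h: "\<not> W' k n < 0"
    have "W' k n = 0" using Wn k h by (meson less_Suc_eq linorder_not_less order_antisym)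
    then show "A k = 0" by (simp add: A_def)
  qed
  have xpos: "\<forall>i<n. x i \<ge> 0" using x' t0 by (simp add: x_def)
  have main: "\<And>k. k < n \<Longrightarrow> (x k > 0 \<longrightarrow> P k + t * S k \<le> x k) \<and> (x k = 0 \<longrightarrow> P k + t * S k \<le> 0)"
  proof -
    fix k assume k: "k < n"
    have Pk: "P k - A k + b' k \<le> x' k" using Pfp[OF k] by simp
    have Pk2: "x' k > 0 \<Longrightarrow> P k - A k + b' k = x' k" using Pfp[OF k] by linarith
    have bk: "b' k \<ge> 0" using b' k by simp
    show "?thesis k"
    proof (cases "k \<in> E")
      case kE: True
      have xk: "x k = x' k" using kE by (simp add: x_def)
      have tSA: "t * S k \<le> - A k"
      proof (cases "W' k n < 0")
        case True then show ?thesis using tS[OF k SE[OF kE True]] by simp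
      next
        case False
        then have "A k = 0" using AE k by blast
        then show ?thesis using Sle[OF k] t0 by (simp add: mult_nonneg_nonpos)
      qed
      show ?thesis
      proof (intro conjI impI)
        assume "x k > 0"
        then show "P k + t * S k \<le> x k" using Pk2 xk tSA bk by simp
      next
        assume "x k = 0"
        then show "P k + t * S k \<le> 0" using Pk xk tSA bk by simp
      qed
    next
      case kI: False
      have xk: "x k = x' k + t" using kI by (simp add: x_def)
      have "t * S k \<le> 0" using Sle[OF k] t0 by (simp add: mult_nonneg_nonpos)
      then have h: "P k + t * S k \<le> x' k + A k" using Pk bk by simp
      show ?thesis
      proof (intro conjI impI)
        assume "x k > 0"
        then show "P k + t * S k \<le> x k" using h xk tA[OF k] by simp
      next
        assume z: "x k = 0"
        moreover have "x' k \<ge> 0" using x' k by simp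
        ultimately have "t = 0" using xk t0 by linarith
        then show "P k + t * S k \<le> 0" using z h xk tA[OF k] x' k by simp
      qed
    qed
  qed
  have fpx: "is_fixed_point n W b x"
    unfolding is_fixed_point_def
  proof (intro allI impI)
    fix k assume k: "k < n"
    have e: "(\<Sum>l<n. W k l * x l) = P k + t * S k" using key by (simp add: P_def)
    show "x k = max 0 ((\<Sum>j<n. W k j * x j) + b k)"
    proof (cases "x k > 0")
      case True then show ?thesis by (simp add: b_def)
    next
      case False
      moreover have "x k \<ge> 0" using xpos k by blast
      ultimately have "x k = 0" by linarith
      then show ?thesis using main[OF k] e by (simp add: b_def)
    qed
  qed
  have bpos: "\<forall>i<n. b i \<ge> 0"
  proof (intro allI impI)
    fix k assume k: "k < n"
    have e: "(\<Sum>l<n. W k l * x l) = P k + t * S k" using key by (simp add: P_def)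
    show "b k \<ge> 0" using main[OF k] e by (simp add: b_def)
  qed
  have "s = {i\<in>E. x i > 0}" using s by (auto simp: x_def)
  then show "s \<in> code n E W" unfolding code_def using bpos xpos fpx by blast
qed

theorem mainTheorem11:
  fixes n :: nat and E :: "nat set" and W W' :: "nat \<Rightarrow> nat \<Rightarrow> real"
  assumes "dale n E W"
    and "dale (Suc n) E W'"
    and "\<forall>i<n. \<forall>j<n. W' i j = W i j"
    and "\<forall>i\<in>E. W' i n < 0 \<longrightarrow> (\<exists>j\<in>{..<n} - E. W i j < 0)"
    and "ground n W"
    and "ground (Suc n) W'"
  shows "code n E W = code (Suc n) E W'"
  using dir1[OF assms(1-3)] dir2[OF assms(1-4)] by blast

end
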